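(* Let $\psi$ be a reduced function with $\delta(\psi)<\sqrt3$. Then either the family $(t_k)$ is finite, or $\psi(t_k)=t_{k-1}-1$ for every sufficiently large $k$.
   Context: $\mathcal{A}$ is an alphabet disjoint from $\mathbb{N}^*=\{1,2,\dots\}$. A function is a map $\psi:\mathbb{N}^*\to\mathbb{N}^*\sqcup\mathcal{A}$ such that for every $n\ge1$ either $\psi(n)\in\mathcal{A}$ or $1\le\psi(n)\le n-1$. Let $(t_k)_{k\ge0}$ be the (finite or infinite) family, in increasing order, of all $n\ge1$ with $\psi(n)\in\mathcal{A}$ or $1\le\psi(n)\le n-2$. $\psi$ is reduced if for every $k\ge1$ such that $t_k$ exists: $\psi(t_k)\ne\psi(t_{k-1})$, and either $\psi(t_k)\in\mathcal{A}$ or $\psi(t_k)<t_{k-1}$. For reduced $\psi$, define $n_1=0$ and for $i\ge1$: $n_{i+1}=2n_i-n_{\psi(i)}$ if $\psi(i)\in\mathbb{N}^*$, $n_{i+1}=2n_i+1$ if $\psi(i)\in\mathcal{A}$; then $\delta(\psi)=\limsup_{i\to\infty}n_{i+1}/n_i$. *)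

theory Defs
  imports "HOL-Analysis.Analysis" "HOL-Library.Liminf_Limsup"
begin

text \<open>A function psi : N* -> N* + A is modelled as psi :: nat => 'a + nat, where
  Inl a is a letter of the alphabet A (type 'a) and Inr m is the positive integer m.
  The value at 0 is irrelevant.\<close>

definition is_function :: "(nat \<Rightarrow> 'a + nat) \<Rightarrow> bool" where
  "is_function psi \<longleftrightarrow>
     (\<forall>n\<ge>1. (\<exists>a. psi n = Inl a) \<or> (\<exists>m. psi n = Inr m \<and> 1 \<le> m \<and> m + 1 \<le> n))"

text \<open>The set of all n >= 1 with psi n in A or 1 <= psi n <= n - 2 (the family (t_k)).\<close>
definition tset :: "(nat \<Rightarrow> 'a + nat) \<Rightarrow> nat set" where
  "tset psi = {n. n \<ge> 1 \<and> ((\<exists>a. psi n = Inl a) \<or> (\<exists>m. psi n = Inr m \<and> 1 \<le> m \<and> m + 2 \<le> n))}"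

text \<open>m and n are consecutive members t_{k-1} = m, t_k = n of the family.\<close>
definition consec :: "nat set \<Rightarrow> nat \<Rightarrow> nat \<Rightarrow> bool" where
  "consec T m n \<longleftrightarrow> m \<in> T \<and> n \<in> T \<and> m < n \<and> (\<forall>j. m < j \<and> j < n \<longrightarrow> j \<notin> T)"

definition reduced :: "(nat \<Rightarrow> 'a + nat) \<Rightarrow> bool" where
  "reduced psi \<longleftrightarrow> is_function psi \<and>
     (\<forall>m n. consec (tset psi) m n \<longrightarrow>
        psi n \<noteq> psi m \<and> ((\<exists>a. psi n = Inl a) \<or> (\<exists>j. psi n = Inr j \<and> j < m)))"

text \<open>The sequence n_i (i >= 1): n_1 = 0, n_{i+1} = 2 n_i - n_{psi i} or 2 n_i + 1.
  The guard on m is always satisfied for a function psi; it only ensures totality.\<close>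
fun nseq :: "(nat \<Rightarrow> 'a + nat) \<Rightarrow> nat \<Rightarrow> int" where
  "nseq psi 0 = 0"
| "nseq psi (Suc 0) = 0"
| "nseq psi (Suc (Suc i)) =
     (case psi (Suc i) of
        Inl a \<Rightarrow> 2 * nseq psi (Suc i) + 1
      | Inr m \<Rightarrow> 2 * nseq psi (Suc i) - (if m \<le> Suc i then nseq psi m else 0))"

definition delta :: "(nat \<Rightarrow> 'a + nat) \<Rightarrow> ereal" where
  "delta psi = limsup (\<lambda>i. ereal (real_of_int (nseq psi (Suc i)) / real_of_int (nseq psi i)))"

end

theory Submission
  imports Defs
begin

lemma fun_1: "is_function psi \<Longrightarrow> \<exists>a. psi 1 = Inl a"
  unfolding is_function_def by (drule spec[of _ 1]) auto

lemma fun_Inr: "is_function psi \<Longrightarrow> psi n = Inr m \<Longrightarrow> n \<ge> 1 \<Longrightarrow> 1 \<le> m \<and> m + 1 \<le> n"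
  unfolding is_function_def by fastforce

lemma one_in_T: "is_function psi \<Longrightarrow> 1 \<in> tset psi"
  using fun_1 unfolding tset_def by auto

lemma notT_prev: "is_function psi \<Longrightarrow> n \<ge> 1 \<Longrightarrow> n \<notin> tset psi \<Longrightarrow> psi n = Inr (n - 1)"
  unfolding is_function_def tset_def
  by (metis (mono_tags, lifting) Suc_eq_plus1 Suc_le_eq add_Suc_right diff_Suc_1 le_antisym mem_Collect_eq not_less_eq_eq one_add_one plus_1_eq_Suc)

lemma nseq_rec: assumes "is_function psi" "i \<ge> 1"
  shows "nseq psi (Suc i) = (case psi i of Inl _ \<Rightarrow> 2 * nseq psi i + 1 | Inr m \<Rightarrow> 2 * nseq psi i - nseq psi m)"
proof -
  obtain k where k: "i = Suc k" using assms(2) by (cases i) auto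
  show ?thesis
  proof (cases "psi i")
    case (Inl a) then show ?thesis using k by simp
  next
    case (Inr m)
    then have "m \<le> i" using fun_Inr[OF assms(1) Inr assms(2)] by simp
    then show ?thesis using Inr k by simp
  qed
qed

lemma nseq_2: "is_function psi \<Longrightarrow> nseq psi 2 = 1"
  using fun_1[of psi] by (auto simp: numeral_2_eq_2)

lemma d_step: assumes f: "is_function psi" and i: "i \<ge> 1"
  and mo: "\<forall>q. 1 \<le> q \<and> q \<le> i \<longrightarrow> nseq psi q \<le> nseq psi i" and nn: "0 \<le> nseq psi i"
  shows "nseq psi (Suc (Suc i)) - nseq psi (Suc i) \<ge> nseq psi (Suc i) - nseq psi i"
proof (cases "psi (Suc i)")
  case (Inl a)
  then show ?thesis using nseq_rec[OF f, of "Suc i"] nn by simp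
next
  case (Inr q)
  then have "1 \<le> q" "q \<le> i" using fun_Inr[OF f Inr] by auto
  then have "nseq psi q \<le> nseq psi i" using mo by blast
  then show ?thesis using nseq_rec[OF f, of "Suc i"] Inr by simp
qed

lemma basic: assumes f: "is_function psi" and i: "i \<ge> 1"
  shows "nseq psi (Suc i) - nseq psi i \<ge> 1 \<and> (\<forall>q. 1 \<le> q \<and> q \<le> i \<longrightarrow> nseq psi q \<le> nseq psi i) \<and> 0 \<le> nseq psi i"
  using i
proof (induction i rule: nat_induct_at_least)
  case base
  then show ?case using nseq_2[OF f] by (auto simp: numeral_2_eq_2)
next
  case (Suc n)
  then have A: "nseq psi (Suc n) - nseq psi n \<ge> 1" and B: "\<forall>q. 1 \<le> q \<and> q \<le> n \<longrightarrow> nseq psi q \<le> nseq psi n"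
    and C: "0 \<le> nseq psi n" by auto
  have D: "nseq psi (Suc (Suc n)) - nseq psi (Suc n) \<ge> nseq psi (Suc n) - nseq psi n"
    using d_step[OF f Suc(1) B C] .
  have E: "\<forall>q. 1 \<le> q \<and> q \<le> Suc n \<longrightarrow> nseq psi q \<le> nseq psi (Suc n)"
  proof (intro allI impI)
    fix q assume "1 \<le> q \<and> q \<le> Suc n"
    then show "nseq psi q \<le> nseq psi (Suc n)" using B A by (cases "q = Suc n") auto
  qed
  show ?case using A C D E by auto
qed

lemma a_mono: "is_function psi \<Longrightarrow> 1 \<le> q \<Longrightarrow> q \<le> r \<Longrightarrow> nseq psi q \<le> nseq psi r"
  using basic[of psi r] by auto

lemma a_nonneg: "is_function psi \<Longrightarrow> 1 \<le> q \<Longrightarrow> 0 \<le> nseq psi q"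
  using basic[of psi q] by auto

lemma d_pos: "is_function psi \<Longrightarrow> 1 \<le> q \<Longrightarrow> 1 \<le> nseq psi (Suc q) - nseq psi q"
  using basic[of psi q] by auto

lemma d_mono: assumes f: "is_function psi" and "1 \<le> i" "i \<le> j"
  shows "nseq psi (Suc i) - nseq psi i \<le> nseq psi (Suc j) - nseq psi j"
  using assms(3)
proof (induction j rule: nat_induct_at_least)
  case base then show ?case by simp
next
  case (Suc n)
  have "1 \<le> n" using assms(2) Suc(1) by simp
  then show ?case using d_step[OF f, of n] basic[OF f, of n] Suc by auto
qed

lemma a_pos: "is_function psi \<Longrightarrow> 2 \<le> q \<Longrightarrow> 1 \<le> nseq psi q"
  using a_mono[of psi 2 q] nseq_2[of psi] by auto

lemma pred_ex: assumes f: "is_function psi" and n: "n \<in> tset psi" "n \<ge> 2"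
  shows "\<exists>m. consec (tset psi) m n"
proof -
  let ?S = "{x \<in> tset psi. x < n}"
  have fin: "finite ?S" by (rule finite_subset[of _ "{..<n}"]) auto
  have ne: "1 \<in> ?S" using one_in_T[OF f] n by auto
  define m where "m = Max ?S"
  have m: "m \<in> ?S" unfolding m_def using fin ne by (intro Max_in) auto
  have mx: "\<And>x. x \<in> ?S \<Longrightarrow> x \<le> m" unfolding m_def using fin by auto
  have "consec (tset psi) m n" unfolding consec_def
  proof (intro conjI allI impI)
    show "m \<in> tset psi" "m < n" using m by auto
    show "n \<in> tset psi" using n by simp
    fix j assume "m < j \<and> j < n"
    then show "j \<notin> tset psi" using mx[of j] by auto
  qed
  then show ?thesis by blast
qed

lemma inv: assumes r: "reduced psi"
  shows "n \<in> tset psi \<Longrightarrow> n \<ge> 2 \<Longrightarrow> nseq psi n \<le> (nseq psi (Suc n) - nseq psi n) + (nseq psi n - nseq psi (n - 1))"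
proof (induction n rule: less_induct)
  case (less n)
  have f: "is_function psi" using r unfolding reduced_def by simp
  obtain m where c: "consec (tset psi) m n" using pred_ex[OF f less(2,3)] by blast
  have mT: "m \<in> tset psi" and mn: "m < n" using c unfolding consec_def by auto
  have m1: "m \<ge> 1" using mT unfolding tset_def by simp
  have red: "(\<exists>a. psi n = Inl a) \<or> (\<exists>j. psi n = Inr j \<and> j < m)"
    using r c unfolding reduced_def by blast
  have dn1: "1 \<le> nseq psi n - nseq psi (n - 1)" 
  proof -
    have "Suc (n - 1) = n" "1 \<le> n - 1" using less(3) by auto
    then show ?thesis using d_pos[OF f, of "n - 1"] by simp
  qed
  show ?case
  proof (cases "\<exists>a. psi n = Inl a")
    case True
    then obtain a where "psi n = Inl a" by blast
    then have "nseq psi (Suc n) = 2 * nseq psi n + 1" using nseq_rec[OF f, of n] less(3) by simp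
    then show ?thesis using dn1 by simp
  next
    case False
    then obtain j where j: "psi n = Inr j" "j < m" using red by blast
    have j1: "1 \<le> j" using fun_Inr[OF f j(1)] less(3) by simp
    then have m2: "m \<ge> 2" using j by simp
    have IH: "nseq psi m \<le> (nseq psi (Suc m) - nseq psi m) + (nseq psi m - nseq psi (m - 1))"
      using less(1)[OF mn mT m2] .
    have e1: "nseq psi (Suc n) = 2 * nseq psi n - nseq psi j" using nseq_rec[OF f, of n] less(3) j by simp
    have e2: "nseq psi j \<le> nseq psi (m - 1)" using a_mono[OF f j1] j by simp
    have e3: "nseq psi (Suc m) - nseq psi m \<le> nseq psi n - nseq psi (n - 1)"
      using d_mono[OF f m1, of "n - 1"] mn by (simp add: Suc_diff_1)
    have e4: "nseq psi (Suc m) \<le> nseq psi n" using a_mono[OF f, of "Suc m" n] mn by simp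
    show ?thesis using IH e1 e2 e3 e4 by linarith
  qed
qed

lemma s_facts: "sqrt 3 * sqrt 3 = (3::real)" "0 < sqrt (3::real)" "sqrt (3::real) < 2" "1 < sqrt (3::real)"
proof -
  show "sqrt 3 * sqrt 3 = (3::real)" by simp
  show "0 < sqrt (3::real)" by simp
  show "sqrt (3::real) < 2" by (rule real_less_lsqrt) auto
  show "1 < sqrt (3::real)" by (rule real_less_rsqrt) auto
qed

lemma algA: fixes A Dm D1 S Dn :: real
  assumes "Dm < (sqrt 3 - 1)*A" "A \<le> Dm + D1" "Dm \<le> S" "S + 2*D1 \<le> Dn" "0 < A"
  shows "(sqrt 3 - 1)*(A+S) \<le> Dn"
proof -
  define s where "s = sqrt (3::real)"
  have s: "s * s = 3" "0 < s" "s < 2" using s_facts unfolding s_def by auto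
  have h1: "0 \<le> (2 - s)*(S - Dm)" using s assms by simp
  have a0: "Dm \<le> (s - 1)*A" using assms(1) unfolding s_def by simp
  have h2: "s * Dm \<le> s * ((s - 1)*A)" using s a0 by (intro mult_left_mono) auto
  have h3: "s * ((s - 1)*A) = 3*A - s * A" using s by (simp add: algebra_simps)
  show ?thesis using assms h1 h2 h3 unfolding s_def[symmetric] by (simp add: algebra_simps)
qed

lemma algB: fixes A Dm D1 D2 S Dn :: real
  assumes "D1 < (sqrt 3 - 1)*(A - D1)" "A - D1 \<le> D1 + D2" "A \<le> Dm + D1" "Dm \<le> S" "S + D1 + D2 \<le> Dn" "0 < A"
  shows "(sqrt 3 - 1)*(A+S) \<le> Dn"
proof -
  define s where "s = sqrt (3::real)"
  have s: "s * s = 3" "0 < s" "s < 2" using s_facts unfolding s_def by auto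
  have h1: "0 \<le> (2 - s)*(S - (A - D1))" using s assms by simp
  have a1: "s * D1 < (s - 1)*A" using assms(1) unfolding s_def[symmetric] by (simp add: algebra_simps)
  have h2: "(3 - s)*(s * D1) \<le> (3 - s)*((s - 1)*A)" using s a1 by (intro mult_left_mono) auto
  have h3a: "(3 - s)*((s - 1)*A) = (4* s - 3 - s * s)*A" by (simp add: algebra_simps)
  have h3b: "s * ((4 - 2* s)*A) = (4* s - 2*(s * s))*A" by (simp add: algebra_simps)
  have h3: "(3 - s)*((s - 1)*A) = s * ((4 - 2* s)*A)" unfolding h3a h3b s(1) by simp
  have h3c: "(3 - s)*(s * D1) = s * ((3 - s)*D1)" by (simp add: algebra_simps)
  have h4: "s * ((3 - s)*D1) \<le> s * ((4 - 2* s)*A)" using h2 h3 h3c by simp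
  have h5: "(3 - s)*D1 \<le> (4 - 2* s)*A" using h4 s(2) by simp
  show ?thesis using assms h1 h5 unfolding s_def[symmetric] by (simp add: algebra_simps)
qed

lemma ratio_Inl: assumes f: "is_function psi" and i: "i \<ge> 2" and p: "psi i = Inl x"
  shows "sqrt 3 * real_of_int (nseq psi i) \<le> real_of_int (nseq psi (Suc i))"
proof -
  have "nseq psi (Suc i) = 2 * nseq psi i + 1" using nseq_rec[OF f, of i] i p by simp
  moreover have "0 \<le> nseq psi i" using a_nonneg[OF f, of i] i by simp
  moreover have "sqrt 3 * real_of_int (nseq psi i) \<le> 2 * real_of_int (nseq psi i)"
    using s_facts(3) calculation(2) by (intro mult_right_mono) auto
  ultimately show ?thesis by simp
qed

lemma key: assumes r: "reduced psi" and c: "consec (tset psi) m n" and v: "psi n \<noteq> Inr (m - 1)"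
  shows "\<exists>i. m - 1 \<le> i \<and> 2 \<le> i \<and> sqrt 3 * real_of_int (nseq psi i) \<le> real_of_int (nseq psi (Suc i))"
proof -
  have f: "is_function psi" using r unfolding reduced_def by simp
  have mT: "m \<in> tset psi" and nT: "n \<in> tset psi" and mn: "m < n" using c unfolding consec_def by auto
  have m1: "m \<ge> 1" using mT unfolding tset_def by simp
  have red: "(\<exists>a. psi n = Inl a) \<or> (\<exists>j. psi n = Inr j \<and> j < m)"
    using r c unfolding reduced_def by blast
  show ?thesis
  proof (cases "\<exists>a. psi n = Inl a")
    case True
    then obtain x where "psi n = Inl x" by blast
    then show ?thesis using ratio_Inl[OF f, of n] mn m1 by (intro exI[of _ n]) auto
  next
    case False
    then obtain j where j: "psi n = Inr j" "j < m" using red by blast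
    have j1: "1 \<le> j" using fun_Inr[OF f j(1)] mn m1 by simp
    have jm: "j \<le> m - 2" using j v j1 by (cases "j = m - 1") auto
    have m3: "m \<ge> 3" using jm j1 j by simp
    define m1 where "m1 = m - 1"
    define m2 where "m2 = m - 2"
    have sm1: "Suc m1 = m" and sm2: "Suc m2 = m1" and m22: "m2 \<ge> 1" using m3 unfolding m1_def m2_def by auto
    show ?thesis
    proof (cases "\<exists>a. psi m = Inl a")
      case True
      then obtain x where "psi m = Inl x" by blast
      then show ?thesis using ratio_Inl[OF f, of m] m3 by (intro exI[of _ m]) auto
    next
      case False
      let ?a = "\<lambda>i. real_of_int (nseq psi i)"
      define A where "A = ?a m"
      define Dm where "Dm = ?a (Suc m) - ?a m"
      define D1 where "D1 = ?a m - ?a m1"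
      define D2 where "D2 = ?a m1 - ?a m2"
      define S where "S = ?a n - ?a m"
      define Dn where "Dn = ?a (Suc n) - ?a n"
      have IHm: "nseq psi m \<le> (nseq psi (Suc m) - nseq psi m) + (nseq psi m - nseq psi m1)"
        using inv[OF r mT] m3 unfolding m1_def by simp
      have Im: "A \<le> Dm + D1" using IHm unfolding A_def Dm_def D1_def by linarith
      have e1: "nseq psi (Suc n) = 2 * nseq psi n - nseq psi j" using nseq_rec[OF f, of n] mn m1 j by simp
      have e2: "nseq psi j \<le> nseq psi m2" using a_mono[OF f j1] jm unfolding m2_def by simp
      have e4: "nseq psi (Suc m) \<le> nseq psi n" using a_mono[OF f, of "Suc m" n] mn by simp
      have Dn: "S + D1 + D2 \<le> Dn" using e1 e2 unfolding S_def D1_def D2_def Dn_def by linarith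
      have DmS: "Dm \<le> S" using e4 unfolding Dm_def S_def by linarith
      have Apos: "0 < A" using a_pos[OF f, of m] m3 unfolding A_def by simp
      have fin: "(sqrt 3 - 1)*(A+S) \<le> Dn \<Longrightarrow> ?thesis"
      proof -
        assume "(sqrt 3 - 1)*(A+S) \<le> Dn"
        then have "sqrt 3 * ?a n \<le> ?a (Suc n)" unfolding A_def S_def Dn_def by (simp add: algebra_simps)
        then show ?thesis using mn m3 by (intro exI[of _ n]) auto
      qed
      show ?thesis
      proof (cases "m1 \<in> tset psi")
        case False
        have "psi m1 = Inr m2" using notT_prev[OF f _ False] m3 unfolding m1_def m2_def by simp
        then have "nseq psi m = 2 * nseq psi m1 - nseq psi m2" using nseq_rec[OF f, of m1] sm1 m3 unfolding m1_def by simp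
        then have D12: "D2 = D1" unfolding D1_def D2_def by simp
        show ?thesis
        proof (cases "sqrt 3 * ?a m \<le> ?a (Suc m)")
          case True then show ?thesis using m3 by (intro exI[of _ m]) auto
        next
          case False
          then have "Dm < (sqrt 3 - 1) * A" unfolding Dm_def A_def by (simp add: algebra_simps)
          then show ?thesis using algA[OF _ Im DmS _ Apos] Dn D12 fin by simp
        qed
      next
        case True
        have IH1: "nseq psi m1 \<le> (nseq psi (Suc m1) - nseq psi m1) + (nseq psi m1 - nseq psi (m1 - 1))"
          using inv[OF r True] m3 unfolding m1_def by simp
        have "m1 - 1 = m2" unfolding m1_def m2_def by simp
        then have I1: "A - D1 \<le> D1 + D2" using IH1 sm1 unfolding A_def D1_def D2_def by simp
        show ?thesis
        proof (cases "sqrt 3 * ?a m1 \<le> ?a (Suc m1)")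
          case True then show ?thesis using m3 unfolding m1_def by (intro exI[of _ m1]) (auto simp: m1_def)
        next
          case False
          then have "D1 < (sqrt 3 - 1) * (A - D1)" using sm1 unfolding D1_def A_def by (simp add: algebra_simps)
          then show ?thesis using algB[OF _ I1 Im DmS Dn Apos] fin by simp
        qed
      qed
    qed
  qed
qed

theorem lemma7p1:
  fixes psi :: "nat \<Rightarrow> 'a + nat"
  assumes "reduced psi"
    and "delta psi < ereal (sqrt 3)"
  shows "finite (tset psi) \<or>
         (\<exists>K. \<forall>m n. consec (tset psi) m n \<and> n \<ge> K \<longrightarrow> psi n = Inr (m - 1))"
proof (rule ccontr)
  assume neg: "\<not> ?thesis"
  have f: "is_function psi" using assms(1) unfolding reduced_def by simp
  have inf: "infinite (tset psi)" using neg by blast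
  have bad: "\<And>K. \<exists>m n. consec (tset psi) m n \<and> n \<ge> K \<and> psi n \<noteq> Inr (m - 1)"
    using neg by blast
  have "eventually (\<lambda>i. ereal (real_of_int (nseq psi (Suc i)) / real_of_int (nseq psi i)) < ereal (sqrt 3)) sequentially"
    using Limsup_lessD[OF assms(2)[unfolded delta_def]] .
  then obtain N where N: "\<And>i. i \<ge> N \<Longrightarrow> real_of_int (nseq psi (Suc i)) / real_of_int (nseq psi i) < sqrt 3"
    unfolding eventually_sequentially by auto
  obtain t where tT: "t \<in> tset psi" and tN: "t \<ge> N + 2"
    using inf unfolding infinite_nat_iff_unbounded_le by blast
  obtain m n where c: "consec (tset psi) m n" and nK: "n \<ge> Suc t" and v: "psi n \<noteq> Inr (m - 1)"
    using bad[of "Suc t"] by blast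
  have "m \<ge> t"
  proof (rule ccontr)
    assume "\<not> m \<ge> t"
    then have "m < t \<and> t < n" using nK by simp
    then show False using c tT unfolding consec_def by blast
  qed
  obtain i where i: "m - 1 \<le> i" "2 \<le> i" and r: "sqrt 3 * real_of_int (nseq psi i) \<le> real_of_int (nseq psi (Suc i))"
    using key[OF assms(1) c v] by blast
  have iN: "i \<ge> N" using i \<open>m \<ge> t\<close> tN by simp
  have ap: "0 < real_of_int (nseq psi i)" using a_pos[OF f i(2)] by simp
  have "sqrt 3 \<le> real_of_int (nseq psi (Suc i)) / real_of_int (nseq psi i)"
    using r ap by (simp add: pos_le_divide_eq)
  then show False using N[OF iN] by simp
qed

end
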